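(* Let $\mathbb{K}$ be an infinite field and $P$ a generic sequence of $n$ homogeneous polynomials in $\mathbb{K}[x_1,\ldots,x_n]$, and let $G_1$ be the reduced Gröbner basis of $\langle P\rangle$ w.r.t. DRL. If the Moreno-Socías conjecture holds, then the number of dense columns of the multiplication matrix $T_1$ equals $|\{g\in G_1:\ x_1\mid\mathrm{lt}(g)\}|$.
   Context: DRL is the degree reverse lexicographic ordering with $x_1<\cdots<x_n$. A property holds for a generic sequence if it holds on a nonempty Zariski-open subset of the coefficient space. Let $B=[\epsilon_1,\ldots,\epsilon_D]$ be the DRL canonical basis of $\mathbb{K}[x_1,\ldots,x_n]/\langle P\rangle$. The $j$-th column of $T_1$ is the coordinate vector of the normal form of $x_1\epsilon_j$. This column is called sparse if $x_1\epsilon_j\in B$ and dense otherwise. A monomial ideal $J$ is weakly reverse lexicographic if, for each minimal generator $\mathbf{t}$, every term of the same total degree greater than $\mathbf{t}$ w.r.t. DRL lies in $J$. Moreno-Socías conjecture: for every infinite field and every generic sequence of $n$ polynomials in $n$ variables, the DRL leading term ideal of the ideal it generates is weakly reverse lexicographic. *)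

theory Defs
  imports "HOL-Library.Poly_Mapping"
begin

text \<open>Monomials in the variables x_1, x_2, ... are exponent vectors (index i = variable x_i);
  polynomials over a field 'a are finitely supported maps from monomials to coefficients.
  K[x_1..x_n] is the set of polynomials all of whose monomials only involve x_1..x_n.\<close>

type_synonym mon = "nat \<Rightarrow>\<^sub>0 nat"
type_synonym 'a mpoly = "mon \<Rightarrow>\<^sub>0 'a"

definition mdeg :: "mon \<Rightarrow> nat" where
  "mdeg t = (\<Sum>i\<in>Poly_Mapping.keys t. Poly_Mapping.lookup t i)"

definition is_mon :: "nat \<Rightarrow> mon \<Rightarrow> bool" where
  "is_mon n t \<longleftrightarrow> Poly_Mapping.keys t \<subseteq> {1..n}"

definition is_poly :: "nat \<Rightarrow> 'a::zero mpoly \<Rightarrow> bool" where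
  "is_poly n p \<longleftrightarrow> (\<forall>t\<in>Poly_Mapping.keys p. is_mon n t)"

definition homogeneous :: "nat \<Rightarrow> nat \<Rightarrow> 'a::zero mpoly \<Rightarrow> bool" where
  "homogeneous n d p \<longleftrightarrow> is_poly n p \<and> (\<forall>t\<in>Poly_Mapping.keys p. mdeg t = d)"

definition mdvd :: "mon \<Rightarrow> mon \<Rightarrow> bool" where
  "mdvd s t \<longleftrightarrow> (\<forall>i. Poly_Mapping.lookup s i \<le> Poly_Mapping.lookup t i)"

text \<open>DRL with x_1 < ... < x_n: s < t iff deg s < deg t, or the degrees agree and at the
  smallest variable index where s and t differ, s has the larger exponent.\<close>
definition drl_less :: "mon \<Rightarrow> mon \<Rightarrow> bool" where
  "drl_less s t \<longleftrightarrow> mdeg s < mdeg t \<or>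
     (mdeg s = mdeg t \<and> (\<exists>i. Poly_Mapping.lookup t i < Poly_Mapping.lookup s i \<and> (\<forall>j<i. Poly_Mapping.lookup s j = Poly_Mapping.lookup t j)))"

definition drl_le :: "mon \<Rightarrow> mon \<Rightarrow> bool" where
  "drl_le s t \<longleftrightarrow> s = t \<or> drl_less s t"

definition lt :: "'a::zero mpoly \<Rightarrow> mon" where
  "lt p = (THE t. t \<in> Poly_Mapping.keys p \<and> (\<forall>s\<in>Poly_Mapping.keys p. drl_le s t))"

definition lc :: "'a::zero mpoly \<Rightarrow> 'a" where
  "lc p = Poly_Mapping.lookup p (lt p)"

definition ideal_gen :: "nat \<Rightarrow> 'a::comm_ring_1 mpoly set \<Rightarrow> 'a mpoly set" where
  "ideal_gen n F = {p. \<exists>S c. finite S \<and> S \<subseteq> F \<and> (\<forall>f\<in>S. is_poly n (c f)) \<and>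
                         p = (\<Sum>f\<in>S. c f * f)}"

definition seq_ideal :: "nat \<Rightarrow> (nat \<Rightarrow> 'a::comm_ring_1 mpoly) \<Rightarrow> 'a mpoly set" where
  "seq_ideal n P = ideal_gen n (P ` {1..n})"

definition lt_ideal :: "'a::zero mpoly set \<Rightarrow> mon set" where
  "lt_ideal I = {t. \<exists>p\<in>I. p \<noteq> 0 \<and> lt p = t}"

definition canon_basis :: "nat \<Rightarrow> 'a::zero mpoly set \<Rightarrow> mon set" where
  "canon_basis n I = {t. is_mon n t \<and> t \<notin> lt_ideal I}"

definition x1 :: mon where "x1 = Poly_Mapping.single 1 1"

text \<open>Dense columns of T_1: basis elements e with x_1 e not in the basis.\<close>
definition dense_cols :: "nat \<Rightarrow> 'a::zero mpoly set \<Rightarrow> mon set" where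
  "dense_cols n I = {t \<in> canon_basis n I. t + x1 \<notin> canon_basis n I}"

definition reduced_GB :: "nat \<Rightarrow> 'a::field mpoly set \<Rightarrow> 'a mpoly set \<Rightarrow> bool" where
  "reduced_GB n I G \<longleftrightarrow> finite G \<and> G \<subseteq> I \<and> 0 \<notin> G \<and> (\<forall>g\<in>G. lc g = 1) \<and>
     (\<forall>p\<in>I. p \<noteq> 0 \<longrightarrow> (\<exists>g\<in>G. mdvd (lt g) (lt p))) \<and>
     (\<forall>g\<in>G. \<forall>g'\<in>G. g \<noteq> g' \<longrightarrow> (\<forall>t\<in>Poly_Mapping.keys g. \<not> mdvd (lt g') t))"

definition min_gen :: "mon set \<Rightarrow> mon \<Rightarrow> bool" where
  "min_gen J t \<longleftrightarrow> t \<in> J \<and> (\<forall>s\<in>J. mdvd s t \<longrightarrow> s = t)"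

definition weakly_revlex :: "nat \<Rightarrow> mon set \<Rightarrow> bool" where
  "weakly_revlex n J \<longleftrightarrow> (\<forall>t. min_gen J t \<longrightarrow>
      (\<forall>s. is_mon n s \<and> mdeg s = mdeg t \<and> drl_less t s \<longrightarrow> s \<in> J))"

text \<open>Coefficient space of sequences of n homogeneous polynomials of degrees d_1..d_n:
  coordinates are indexed by pairs (i, t), t a monomial of degree d_i in x_1..x_n.
  Points are functions vanishing outside this index set; polynomial functions on it are
  given by polynomials in variables indexed by such pairs.\<close>

definition coeff_index :: "nat \<Rightarrow> (nat \<Rightarrow> nat) \<Rightarrow> (nat \<times> mon) set" where
  "coeff_index n d = {(i, t). i \<in> {1..n} \<and> is_mon n t \<and> mdeg t = d i}"

definition coeff_space :: "nat \<Rightarrow> (nat \<Rightarrow> nat) \<Rightarrow> (nat \<times> mon \<Rightarrow> 'a::zero) set" where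
  "coeff_space n d = {a. \<forall>v. v \<notin> coeff_index n d \<longrightarrow> a v = 0}"

definition eval_cpoly :: "(((nat \<times> mon) \<Rightarrow>\<^sub>0 nat) \<Rightarrow>\<^sub>0 'a::comm_ring_1) \<Rightarrow> (nat \<times> mon \<Rightarrow> 'a) \<Rightarrow> 'a" where
  "eval_cpoly h a = (\<Sum>m\<in>Poly_Mapping.keys h. Poly_Mapping.lookup h m * (\<Prod>v\<in>Poly_Mapping.keys m. a v ^ Poly_Mapping.lookup m v))"

definition zariski_open :: "nat \<Rightarrow> (nat \<Rightarrow> nat) \<Rightarrow> (nat \<times> mon \<Rightarrow> 'a::comm_ring_1) set \<Rightarrow> bool" where
  "zariski_open n d U \<longleftrightarrow> (\<exists>S. U = coeff_space n d - {a \<in> coeff_space n d. \<forall>h\<in>S. eval_cpoly h a = 0})"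

definition coeff_vec :: "nat \<Rightarrow> (nat \<Rightarrow> 'a::zero mpoly) \<Rightarrow> (nat \<times> mon \<Rightarrow> 'a)" where
  "coeff_vec n P = (\<lambda>(i, t). if i \<in> {1..n} then Poly_Mapping.lookup (P i) t else 0)"

definition generic :: "nat \<Rightarrow> (nat \<Rightarrow> nat) \<Rightarrow> ((nat \<Rightarrow> 'a::comm_ring_1 mpoly) \<Rightarrow> bool) \<Rightarrow> bool" where
  "generic n d Q \<longleftrightarrow> (\<exists>U. zariski_open n d U \<and> U \<noteq> {} \<and>
      (\<forall>P. (\<forall>i\<in>{1..n}. homogeneous n (d i) (P i)) \<and> coeff_vec n P \<in> U \<longrightarrow> Q P))"

definition moreno_socias :: "'a::field itself \<Rightarrow> bool" where
  "moreno_socias _ \<longleftrightarrow> (\<forall>n d. generic n d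
      (\<lambda>P::nat \<Rightarrow> 'a mpoly. weakly_revlex n (lt_ideal (seq_ideal n P))))"

end

theory Submission
  imports Defs
begin
abbreviation "lookup \<equiv> Poly_Mapping.lookup"
abbreviation "keys \<equiv> Poly_Mapping.keys"
abbreviation "single \<equiv> Poly_Mapping.single"

lemma lookup_single_mult: "lookup (single (m::mon) (1::'a::comm_ring_1) * p) (m + t) = lookup p t"
proof -
  have "lookup (single m (1::'a) * p) (m + t) = (\<Sum>a. (\<Sum>q. lookup p q when m + t = a + q) when m = a)"
    by (simp add: lookup_mult lookup_single when_mult)
  also have "\<dots> = (\<Sum>q. lookup p q when m + t = m + q)" by simp
  also have "\<dots> = (\<Sum>q. lookup p q when t = q)"
  proof -
    have "\<And>q. (m + t = m + q) = (t = q)"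
    proof
      fix q :: mon assume h: "m + t = m + q"
      show "t = q"
      proof (rule poly_mapping_eqI)
        fix i
        have "lookup (m + t) i = lookup (m + q) i" using h by simp
        then show "lookup t i = lookup q i" by (simp add: lookup_add)
      qed
    qed simp
    then show ?thesis by simp
  qed
  also have "\<dots> = lookup p t" by simp
  finally show ?thesis .
qed

lemma keys_single_mult: "keys (single (m::mon) (1::'a::comm_ring_1) * p) = (+) m ` keys p"
proof
  show "keys (single m 1 * p) \<subseteq> (+) m ` keys p"
    using keys_mult[of "single m (1::'a)" p] by auto
  show "(+) m ` keys p \<subseteq> keys (single m 1 * p)"
    by (auto simp: lookup_single_mult in_keys_iff)
qed

lemma mdeg_sum: "finite A \<Longrightarrow> keys t \<subseteq> A \<Longrightarrow> mdeg t = (\<Sum>i\<in>A. lookup t i)"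
  unfolding mdeg_def by (rule sum.mono_neutral_left) (auto simp: in_keys_iff)

lemma mdeg_add: "mdeg (s + t) = mdeg s + mdeg t"
proof -
  let ?A = "keys s \<union> keys t"
  have "mdeg (s+t) = (\<Sum>i\<in>?A. lookup (s+t) i)"
    by (rule mdeg_sum) (use keys_add[of s t] in auto)
  also have "\<dots> = (\<Sum>i\<in>?A. lookup s i) + (\<Sum>i\<in>?A. lookup t i)"
    by (simp add: lookup_add sum.distrib)
  also have "\<dots> = mdeg s + mdeg t"
    using mdeg_sum[of ?A s] mdeg_sum[of ?A t] by simp
  finally show ?thesis .
qed

definition rl :: "mon \<Rightarrow> mon \<Rightarrow> bool" where
  "rl s t \<longleftrightarrow> (\<exists>i. lookup t i < lookup s i \<and> (\<forall>j<i. lookup s j = lookup t j))"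

lemma drl_less_rl: "drl_less s t \<longleftrightarrow> mdeg s < mdeg t \<or> (mdeg s = mdeg t \<and> rl s t)"
  unfolding drl_less_def rl_def by simp

lemma rl_asym: "rl s t \<Longrightarrow> rl t s \<Longrightarrow> False"
  unfolding rl_def
  by (metis less_asym linorder_neqE_nat)

lemma rl_trans: "rl s t \<Longrightarrow> rl t u \<Longrightarrow> rl s u"
  unfolding rl_def
proof (elim exE conjE)
  fix i k assume a: "lookup t i < lookup s i" "\<forall>j<i. lookup s j = lookup t j"
    "lookup u k < lookup t k" "\<forall>j<k. lookup t j = lookup u j"
  show "\<exists>i. lookup u i < lookup s i \<and> (\<forall>j<i. lookup s j = lookup u j)"
  proof (cases i k rule: linorder_cases)
    case less then show ?thesis using a by (intro exI[of _ i]) auto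
  next
    case equal then show ?thesis using a by (intro exI[of _ i]) auto
  next
    case greater then show ?thesis using a by (intro exI[of _ k]) auto
  qed
qed

lemma rl_total: "s \<noteq> t \<Longrightarrow> rl s t \<or> rl t s"
proof -
  assume "s \<noteq> t"
  then have ex: "\<exists>i. lookup s i \<noteq> lookup t i" by (meson poly_mapping_eqI)
  define i where "i = (LEAST i. lookup s i \<noteq> lookup t i)"
  have i1: "lookup s i \<noteq> lookup t i" unfolding i_def by (rule LeastI_ex[OF ex])
  have i2: "\<forall>j<i. lookup s j = lookup t j" unfolding i_def using not_less_Least by blast
  show ?thesis unfolding rl_def using i1 i2
    by (metis linorder_neqE_nat)
qed

lemma rl_add: "rl s t \<Longrightarrow> rl (s + m) (t + m)"
  unfolding rl_def by (auto simp: lookup_add)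

lemma drl_le_antisym: "drl_le s t \<Longrightarrow> drl_le t s \<Longrightarrow> s = t"
  unfolding drl_le_def drl_less_rl using rl_asym by auto

lemma drl_le_trans: "drl_le s t \<Longrightarrow> drl_le t u \<Longrightarrow> drl_le s u"
  unfolding drl_le_def drl_less_rl using rl_trans by auto

lemma drl_le_total: "drl_le s t \<or> drl_le t s"
  unfolding drl_le_def drl_less_rl using rl_total by (metis linorder_neqE_nat)

lemma drl_le_add: "drl_le s t \<Longrightarrow> drl_le (s + m) (t + m)"
  unfolding drl_le_def drl_less_rl using rl_add by (auto simp: mdeg_add)

lemma drl_max: "finite A \<Longrightarrow> A \<noteq> {} \<Longrightarrow> \<exists>t\<in>A. \<forall>s\<in>A. drl_le s t"
proof (induction A rule: finite_ne_induct)
  case (singleton x) then show ?case by (simp add: drl_le_def)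
next
  case (insert x F)
  then obtain t where t: "t \<in> F" "\<forall>s\<in>F. drl_le s t" by blast
  show ?case
  proof (cases "drl_le x t")
    case True then show ?thesis using t by auto
  next
    case False
    then have "drl_le t x" using drl_le_total by blast
    then have "\<forall>s\<in>F. drl_le s x" using t drl_le_trans by blast
    then show ?thesis by (intro bexI[of _ x]) (auto simp: drl_le_def)
  qed
qed

lemma lt_spec: "p \<noteq> 0 \<Longrightarrow> lt p \<in> keys p \<and> (\<forall>s\<in>keys p. drl_le s (lt p))"
proof -
  assume "p \<noteq> 0"
  then have "keys p \<noteq> {}" by simp
  then obtain t where t: "t \<in> keys p" "\<forall>s\<in>keys p. drl_le s t" using drl_max[of "keys p"] by auto
  show ?thesis unfolding lt_def
    by (rule theI[of _ t]) (use t drl_le_antisym in auto)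
qed

lemma lt_eqI: "t \<in> keys p \<Longrightarrow> \<forall>s\<in>keys p. drl_le s t \<Longrightarrow> lt p = t"
  unfolding lt_def by (rule the_equality) (auto intro: drl_le_antisym)

lemma lt_single_mult:
  assumes "p \<noteq> (0::'a::comm_ring_1 mpoly)"
  shows "single m 1 * p \<noteq> 0 \<and> lt (single m 1 * p) = m + lt p"
proof -
  have k: "keys (single m (1::'a) * p) = (+) m ` keys p" by (rule keys_single_mult)
  have s: "lt p \<in> keys p" "\<forall>s\<in>keys p. drl_le s (lt p)" using lt_spec[OF assms] by auto
  have "m + lt p \<in> keys (single m 1 * p)" using s k by auto
  then have "single m 1 * p \<noteq> 0" by auto
  moreover have "lt (single m 1 * p) = m + lt p"
  proof (rule lt_eqI)
    show "m + lt p \<in> keys (single m 1 * p)" by fact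
    show "\<forall>s\<in>keys (single m 1 * p). drl_le s (m + lt p)"
      using s k drl_le_add by (metis (no_types, lifting) add.commute imageE)
  qed
  ultimately show ?thesis by simp
qed


lemma lookup_x1: "lookup x1 i = (if i = 1 then 1 else 0)"
  by (simp add: x1_def lookup_single when_def)

lemma mdvd_refl: "mdvd s s" by (simp add: mdvd_def)
lemma mdvd_trans: "mdvd a b \<Longrightarrow> mdvd b c \<Longrightarrow> mdvd a c"
  unfolding mdvd_def using order_trans by blast
lemma mdvd_antisym: "mdvd a b \<Longrightarrow> mdvd b a \<Longrightarrow> a = b"
  unfolding mdvd_def by (metis le_antisym poly_mapping_eqI)

lemma mdvd_split: "mdvd a b \<Longrightarrow> b = (b - a) + a"
  unfolding mdvd_def by (intro poly_mapping_eqI) (simp add: lookup_add lookup_minus)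

lemma is_mon_add: "is_mon n a \<Longrightarrow> is_mon n b \<Longrightarrow> is_mon n (a + b)"
  unfolding is_mon_def using keys_add[of a b] by blast

lemma is_mon_minus: "is_mon n a \<Longrightarrow> is_mon n (a - b)"
  unfolding is_mon_def by (auto simp: in_keys_iff lookup_minus)

lemma is_poly_add: "is_poly n p \<Longrightarrow> is_poly n q \<Longrightarrow> is_poly n (p + q)"
  unfolding is_poly_def using keys_add[of p q] by blast

lemma is_poly_mult: "is_poly n p \<Longrightarrow> is_poly n (q::'a::comm_ring_1 mpoly) \<Longrightarrow> is_poly n (p * q)"
  unfolding is_poly_def using keys_mult[of p q] is_mon_add by blast

lemma is_poly_sum: "finite S \<Longrightarrow> (\<forall>f\<in>S. is_poly n (h f)) \<Longrightarrow> is_poly n (\<Sum>f\<in>S. h f)"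
proof (induction S rule: finite_induct)
  case empty then show ?case by (simp add: is_poly_def)
next
  case (insert x F) then show ?case by (simp add: is_poly_add)
qed

lemma ideal_is_poly:
  assumes "\<forall>f\<in>F. is_poly n f" "p \<in> ideal_gen n (F::'a::comm_ring_1 mpoly set)"
  shows "is_poly n p"
proof -
  obtain S c where "finite S" "S \<subseteq> F" "\<forall>f\<in>S. is_poly n (c f)" "p = (\<Sum>f\<in>S. c f * f)"
    using assms(2) unfolding ideal_gen_def by blast
  then show ?thesis using assms(1) by (auto intro!: is_poly_sum is_poly_mult)
qed

lemma ideal_mult:
  assumes "is_mon n m" "p \<in> ideal_gen n (F::'a::comm_ring_1 mpoly set)"
  shows "single m 1 * p \<in> ideal_gen n F"
proof -
  obtain S c where S: "finite S" "S \<subseteq> F" "\<forall>f\<in>S. is_poly n (c f)" "p = (\<Sum>f\<in>S. c f * f)"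
    using assms(2) unfolding ideal_gen_def by blast
  have m: "is_poly n (single m (1::'a))" using assms(1) by (simp add: is_poly_def)
  have "single m 1 * p = (\<Sum>f\<in>S. (single m 1 * c f) * f)"
    by (simp add: S(4) sum_distrib_left mult.assoc)
  then show ?thesis unfolding ideal_gen_def using S m
    by (intro CollectI exI[of _ S] exI[of _ "\<lambda>f. single m 1 * c f"]) (auto intro: is_poly_mult)
qed


lemma mdeg_single: "mdeg (single j (1::nat)) = 1"
  by (simp add: mdeg_def)

lemma main_comb:
  fixes I :: "'a::field mpoly set"
  assumes GB: "reduced_GB n I G"
    and Ipoly: "\<forall>p\<in>I. is_poly n p"
    and Imult: "\<forall>p\<in>I. \<forall>m. is_mon n m \<longrightarrow> single m 1 * p \<in> I"
    and wr: "weakly_revlex n (lt_ideal I)"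
    and n1: "n \<ge> 1"
  shows "card (dense_cols n I) = card {g\<in>G. mdvd x1 (lt g)}"
proof -
  define J where "J = lt_ideal I"
  have G: "finite G" "G \<subseteq> I" "0 \<notin> G"
    "\<forall>p\<in>I. p \<noteq> 0 \<longrightarrow> (\<exists>g\<in>G. mdvd (lt g) (lt p))"
    "\<forall>g\<in>G. \<forall>g'\<in>G. g \<noteq> g' \<longrightarrow> (\<forall>t\<in>keys g. \<not> mdvd (lt g') t)"
    using GB unfolding reduced_GB_def by auto
  have A: "\<exists>g\<in>G. mdvd (lt g) t" if "t \<in> J" for t
    using that G(4) unfolding J_def lt_ideal_def by auto
  have ltk: "lt g \<in> keys g" if "g \<in> G" for g
    using lt_spec[of g] G(3) that by auto
  have ltmon: "is_mon n (lt g)" if "g \<in> G" for g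
    using ltk[OF that] Ipoly G(2) that unfolding is_poly_def by auto
  have B: "t \<in> J" if "g \<in> G" "mdvd (lt g) t" "is_mon n t" for g t
  proof -
    define m where "m = t - lt g"
    have tm: "t = m + lt g" unfolding m_def using mdvd_split[OF that(2)] .
    have mm: "is_mon n m" unfolding m_def using is_mon_minus[OF that(3)] .
    have "g \<noteq> 0" using G(3) that(1) by auto
    then have q: "single m 1 * g \<noteq> 0" "lt (single m 1 * g) = t"
      using lt_single_mult[of g m] tm by auto
    have "single m 1 * g \<in> I" using Imult G(2) that(1) mm by auto
    then show ?thesis unfolding J_def lt_ideal_def using q by blast
  qed
  have E: "g' = g" if "g \<in> G" "g' \<in> G" "mdvd (lt g') (lt g)" for g g'
  proof (rule ccontr)
    assume "g' \<noteq> g"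
    then have "g \<noteq> g'" by simp
    from G(5)[rule_format, OF that(1) that(2) this ltk[OF that(1)]] that(3) show False by simp
  qed
  have C: "lt g \<in> J" if "g \<in> G" for g
  proof -
    have "g \<in> I" "g \<noteq> 0" using that G(2,3) by auto
    then show ?thesis unfolding J_def lt_ideal_def by blast
  qed
  have D: "min_gen J (lt g)" if "g \<in> G" for g
    unfolding min_gen_def
  proof (intro conjI ballI impI)
    show "lt g \<in> J" using C[OF that] .
    fix s assume "s \<in> J" "mdvd s (lt g)"
    then obtain g' where "g' \<in> G" "mdvd (lt g') s" using A by blast
    then have "g' = g" using E[OF that] \<open>mdvd s (lt g)\<close> mdvd_trans by blast
    then show "s = lt g" using \<open>mdvd (lt g') s\<close> \<open>mdvd s (lt g)\<close> mdvd_antisym by blast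
  qed
  have x1mon: "is_mon n x1" using n1 by (simp add: is_mon_def x1_def)
  define f where "f g = lt g - x1" for g :: "'a mpoly"
  have "bij_betw f {g\<in>G. mdvd x1 (lt g)} (dense_cols n I)"
  proof (rule bij_betw_imageI)
    show "inj_on f {g\<in>G. mdvd x1 (lt g)}"
    proof (rule inj_onI)
      fix g1 g2 assume a: "g1 \<in> {g\<in>G. mdvd x1 (lt g)}" "g2 \<in> {g\<in>G. mdvd x1 (lt g)}" "f g1 = f g2"
      have "lt g1 = lt g2"
        using a mdvd_split[of x1 "lt g1"] mdvd_split[of x1 "lt g2"] unfolding f_def by auto
      then show "g1 = g2" using E a mdvd_refl by auto
    qed
    show "f ` {g\<in>G. mdvd x1 (lt g)} = dense_cols n I"
    proof
      show "f ` {g\<in>G. mdvd x1 (lt g)} \<subseteq> dense_cols n I"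
      proof clarify
        fix g assume g: "g \<in> G" "mdvd x1 (lt g)"
        have sp: "lt g = f g + x1" unfolding f_def using mdvd_split[OF g(2)] .
        have l1: "lookup (lt g) 1 \<ge> 1" using g(2) unfolding mdvd_def lookup_x1
          by (metis (full_types))
        have fm: "is_mon n (f g)" unfolding f_def using is_mon_minus ltmon g by blast
        have "f g \<notin> J"
        proof
          assume "f g \<in> J"
          then obtain g' where "g' \<in> G" "mdvd (lt g') (f g)" using A by blast
          moreover have "mdvd (f g) (lt g)" using sp unfolding mdvd_def by (simp add: lookup_add)
          ultimately have "g' = g" using E g(1) mdvd_trans by blast
          then have "mdvd (lt g) (f g)" using \<open>mdvd (lt g') (f g)\<close> by simp
          then have "lookup (lt g) 1 \<le> lookup (f g) 1" unfolding mdvd_def by blast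
          then show False using l1 unfolding f_def by (simp add: lookup_minus lookup_x1)
        qed
        then show "f g \<in> dense_cols n I"
          using fm C[OF g(1)] sp unfolding dense_cols_def canon_basis_def J_def by auto
      qed
      show "dense_cols n I \<subseteq> f ` {g\<in>G. mdvd x1 (lt g)}"
      proof
        fix t assume t: "t \<in> dense_cols n I"
        have tm: "is_mon n t" and tJ: "t \<notin> J" and "t + x1 \<notin> canon_basis n I"
          using t unfolding dense_cols_def canon_basis_def J_def by auto
        then have tx: "t + x1 \<in> J" using is_mon_add[OF tm x1mon]
          unfolding canon_basis_def J_def by auto
        then obtain g where g: "g \<in> G" "mdvd (lt g) (t + x1)" using A by blast
        have eq: "lt g = t + x1"
        proof (rule ccontr)
          assume ne: "lt g \<noteq> t + x1"
          have ndv: "\<not> mdvd (lt g) t" using B[OF g(1) _ tm] tJ by blast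
          have le: "lookup (lt g) i \<le> lookup t i + (if i = 1 then 1 else 0)" for i
            using g(2) unfolding mdvd_def by (simp add: lookup_add lookup_x1)
          have l1: "lookup (lt g) 1 = lookup t 1 + 1"
          proof -
            obtain i where "\<not> lookup (lt g) i \<le> lookup t i" using ndv unfolding mdvd_def by blast
            then show ?thesis using le[of i] le[of 1] by (cases "i = 1") auto
          qed
          obtain j where j: "lookup (lt g) j \<noteq> lookup (t + x1) j"
            using ne by (meson poly_mapping_eqI)
          have j1: "j \<noteq> 1" using j l1 by (auto simp: lookup_add lookup_x1)
          have jlt: "lookup (lt g) j < lookup t j" using j le[of j] j1
            by (simp add: lookup_add lookup_x1)
          then have "j \<in> keys t" by (simp add: in_keys_iff)
          then have jr: "j \<in> {1..n}" using tm unfolding is_mon_def by auto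
          define s where "s = (lt g - x1) + single j 1"
          have ls: "lookup s i = lookup (lt g) i - (if i = 1 then 1 else 0) + (if i = j then 1 else 0)" for i
            unfolding s_def by (simp add: lookup_add lookup_minus lookup_x1 lookup_single when_def)
          have smon: "is_mon n s" unfolding s_def
            using is_mon_add[OF is_mon_minus[OF ltmon[OF g(1)]], of "single j 1"] jr
            by (simp add: is_mon_def)
          have dv1: "mdvd x1 (lt g)" unfolding mdvd_def lookup_x1 using l1 by simp
          have "mdeg (lt g) = mdeg (lt g - x1) + 1"
            using mdvd_split[OF dv1] mdeg_add[of "lt g - x1" x1] mdeg_single[of 1]
            unfolding x1_def by simp
          then have sdeg: "mdeg s = mdeg (lt g)" unfolding s_def using mdeg_single[of j] by (simp add: mdeg_add)
          have "drl_less (lt g) s" unfolding drl_less_def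
          proof (rule disjI2, intro conjI exI[of _ 1])
            show "mdeg (lt g) = mdeg s" using sdeg by simp
            show "lookup s 1 < lookup (lt g) 1" using ls[of 1] l1 j1 by simp
            show "\<forall>ja<1. lookup (lt g) ja = lookup s ja" using ls jr by auto
          qed
          then have "s \<in> J" using wr D[OF g(1)] smon sdeg
            unfolding weakly_revlex_def J_def by blast
          then obtain g'' where g'': "g'' \<in> G" "mdvd (lt g'') s" using A by blast
          have "mdvd s t" unfolding mdvd_def
          proof
            fix i show "lookup s i \<le> lookup t i"
              using ls[of i] le[of i] l1 jlt by (cases "i = 1"; cases "i = j") auto
          qed
          then have "t \<in> J" using B[OF g''(1) _ tm] g''(2) mdvd_trans by blast
          then show False using tJ by simp
        qed
        have "mdvd x1 (lt g)" unfolding eq mdvd_def by (simp add: lookup_add)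
        moreover have "f g = t" unfolding f_def eq
          by (intro poly_mapping_eqI) (simp add: lookup_add lookup_minus)
        ultimately show "t \<in> f ` {g\<in>G. mdvd x1 (lt g)}" using g(1) by blast
      qed
    qed
  qed
  then show ?thesis by (simp add: bij_betw_same_card)
qed


theorem corollary6p7:
  fixes n :: nat and d :: "nat \<Rightarrow> nat"
  assumes "infinite (UNIV :: 'a::field set)"
    and "n \<ge> 1"
    and "moreno_socias TYPE('a)"
  shows "generic n d (\<lambda>P::nat \<Rightarrow> 'a mpoly. \<forall>G. reduced_GB n (seq_ideal n P) G \<longrightarrow>
            card (dense_cols n (seq_ideal n P)) = card {g \<in> G. mdvd x1 (lt g)})"
proof -
  have "generic n d (\<lambda>P::nat \<Rightarrow> 'a mpoly. weakly_revlex n (lt_ideal (seq_ideal n P)))"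
    using assms(3) unfolding moreno_socias_def by blast
  then obtain U where U: "zariski_open n d U" "U \<noteq> {}"
    "\<And>P::nat \<Rightarrow> 'a mpoly. (\<forall>i\<in>{1..n}. homogeneous n (d i) (P i)) \<and> coeff_vec n P \<in> U \<Longrightarrow>
        weakly_revlex n (lt_ideal (seq_ideal n P))"
    unfolding generic_def by blast
  show ?thesis unfolding generic_def
  proof (intro exI[of _ U] conjI allI impI)
    show "zariski_open n d U" "U \<noteq> {}" using U by auto
    fix P :: "nat \<Rightarrow> 'a mpoly" and G
    assume h: "(\<forall>i\<in>{1..n}. homogeneous n (d i) (P i)) \<and> coeff_vec n P \<in> U"
      and gb: "reduced_GB n (seq_ideal n P) G"
    have wr: "weakly_revlex n (lt_ideal (seq_ideal n P))" using U(3) h by blast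
    have Fp: "\<forall>f\<in>P ` {1..n}. is_poly n f" using h unfolding homogeneous_def by auto
    have Ip: "\<forall>p\<in>seq_ideal n P. is_poly n p"
      unfolding seq_ideal_def using ideal_is_poly[OF Fp] by blast
    have Im: "\<forall>p\<in>seq_ideal n P. \<forall>m. is_mon n m \<longrightarrow> single m 1 * p \<in> seq_ideal n P"
      unfolding seq_ideal_def using ideal_mult by blast
    show "card (dense_cols n (seq_ideal n P)) = card {g \<in> G. mdvd x1 (lt g)}"
      by (rule main_comb[OF gb Ip Im wr assms(2)])
  qed
qed

end
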